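(* Let $p\in(0,1/2]$ be a fixed constant. There exist positive constants $C, c$ depending only on $p$ such that the following holds. Let $d\le n$ be positive integers with $d=pn$, let $m$ be an integer with $n/2\le m\le n$, and let $v\in\mathbb{S}^{n-1}$ be a fixed vector. Let $M$ be a random $m\times n$ matrix whose rows are independent random vectors, each uniformly distributed on the set of vectors in $\{0,1\}^n$ with exactly $d$ ones. Then \[ \mathbb{P}\left(\|Mv\|_2\le c\sqrt{pn}\right)\le e^{-Cn}. \]
   Context: $\mathbb{S}^{n-1}=\{x\in\mathbb{R}^n:\|x\|_2=1\}$ is the Euclidean unit sphere and $\|\cdot\|_2$ the Euclidean norm. *)

theory Defs
  imports "HOL-Probability.Probability"
begin

text \<open>Vectors in {0,1}^n with exactly d ones, as functions on indices 0..n-1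
  (extended by 0 outside the range, so that the set is finite).\<close>
definition zero_one_rows :: "nat \<Rightarrow> nat \<Rightarrow> (nat \<Rightarrow> real) set" where
  "zero_one_rows n d = {x. (\<forall>j. x j = 0 \<or> x j = 1) \<and> (\<forall>j\<ge>n. x j = 0)
      \<and> card {j. j < n \<and> x j = 1} = d}"

text \<open>The uniform distribution on this set is exactly the law of a matrix with
  independent rows, each uniform on zero_one_rows n d.\<close>
definition row_matrices :: "nat \<Rightarrow> nat \<Rightarrow> nat \<Rightarrow> (nat \<Rightarrow> nat \<Rightarrow> real) set" where
  "row_matrices m n d = {M. (\<forall>i<m. M i \<in> zero_one_rows n d) \<and> (\<forall>i\<ge>m. M i = (\<lambda>_. 0))}"

definition matvec_norm :: "nat \<Rightarrow> nat \<Rightarrow> (nat \<Rightarrow> nat \<Rightarrow> real) \<Rightarrow> (nat \<Rightarrow> real) \<Rightarrow> real" where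
  "matvec_norm m n M v = sqrt (\<Sum>i<m. (\<Sum>j<n. M i j * v j)\<^sup>2)"

end

theory Submission
  imports Defs
begin


lemma sum_Pow_insert:
  assumes "finite K" "k \<notin> K"
  shows "(\<Sum>T\<in>Pow (insert k K). g T) = (\<Sum>T\<in>Pow K. g T) + (\<Sum>T\<in>Pow K. g (insert k T))"
proof -
  have "(\<Sum>T\<in>Pow (insert k K). g T) = (\<Sum>T\<in>Pow K. g T) + (\<Sum>T\<in>insert k ` Pow K. g T)"
    unfolding Pow_insert by (rule sum.union_disjoint) (use assms in auto)
  also have "(\<Sum>T\<in>insert k ` Pow K. g T) = (\<Sum>T\<in>Pow K. g (insert k T))"
    by (rule sum.reindex_cong[where l="insert k"]) (use assms in \<open>auto simp: inj_on_def\<close>)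
  finally show ?thesis .
qed

lemma subset_m2:
  fixes u :: "nat \<Rightarrow> real"
  assumes "finite K"
  shows "(\<Sum>T\<in>Pow K. (c + (\<Sum>k\<in>T. u k))\<^sup>2) =
     2 ^ card K * ((c + (\<Sum>k\<in>K. u k)/2)\<^sup>2 + (\<Sum>k\<in>K. (u k/2)\<^sup>2))"
  using assms
proof (induction K arbitrary: c rule: finite_induct)
  case empty
  then show ?case by simp
next
  case (insert k K)
  have e: "(\<Sum>T\<in>Pow K. (c + (\<Sum>k\<in>insert k T. u k))\<^sup>2) = (\<Sum>T\<in>Pow K. ((c + u k) + (\<Sum>k\<in>T. u k))\<^sup>2)"
    by (rule sum.cong) (use insert in \<open>auto simp: finite_subset sum.insert_if add.assoc\<close>)
  show ?case
  proof -
    have "\<And>P c u s q::real. P * ((c + s/2)\<^sup>2 + q) + P * ((c + u + s/2)\<^sup>2 + q) = 2 * P * ((c + (u+s)/2)\<^sup>2 + ((u/2)\<^sup>2 + q))"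
      by (simp add: field_simps power2_eq_square)
    then show ?thesis
      unfolding sum_Pow_insert[OF insert(1,2)] e insert(3)
      using insert(1,2) by (simp add: card_insert_if)
  qed
qed

lemma subset_m4:
  fixes u :: "nat \<Rightarrow> real"
  assumes "finite K"
  shows "(\<Sum>T\<in>Pow K. (c + (\<Sum>k\<in>T. u k))^4) =
     2 ^ card K * ((c + (\<Sum>k\<in>K. u k)/2)^4 + 6 * (c + (\<Sum>k\<in>K. u k)/2)\<^sup>2 * (\<Sum>k\<in>K. (u k/2)\<^sup>2)
       + 3 * (\<Sum>k\<in>K. (u k/2)\<^sup>2)\<^sup>2 - 2 * (\<Sum>k\<in>K. (u k/2)^4))"
  using assms
proof (induction K arbitrary: c rule: finite_induct)
  case empty
  then show ?case by simp
next
  case (insert k K)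
  have e: "(\<Sum>T\<in>Pow K. (c + (\<Sum>k\<in>insert k T. u k))^4) = (\<Sum>T\<in>Pow K. ((c + u k) + (\<Sum>k\<in>T. u k))^4)"
    by (rule sum.cong) (use insert in \<open>auto simp: finite_subset sum.insert_if add.assoc\<close>)
  show ?case
  proof -
    have "\<And>P c u s q r::real. P * ((c + s/2)^4 + 6 * (c + s/2)\<^sup>2 * q + 3 * q\<^sup>2 - 2 * r)
       + P * ((c + u + s/2)^4 + 6 * (c + u + s/2)\<^sup>2 * q + 3 * q\<^sup>2 - 2 * r)
       = 2 * P * ((c + (u+s)/2)^4 + 6 * (c + (u+s)/2)\<^sup>2 * ((u/2)\<^sup>2 + q) + 3 * ((u/2)\<^sup>2 + q)\<^sup>2 - 2 * ((u/2)^4 + r))"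
      by (simp add: field_simps power2_eq_square power4_eq_xxxx)
    then show ?thesis
      unfolding sum_Pow_insert[OF insert(1,2)] e insert(3)
      using insert(1,2) by (simp add: card_insert_if)
  qed
qed

lemma pz_subsets:
  fixes u :: "nat \<Rightarrow> real" and c :: real
  assumes K: "finite K"
  defines "E \<equiv> (c + (\<Sum>k\<in>K. u k)/2)\<^sup>2 + (\<Sum>k\<in>K. (u k/2)\<^sup>2)"
  assumes Epos: "E > 0"
  shows "(2::real) ^ card K \<le> 12 * real (card {T\<in>Pow K. (c + (\<Sum>k\<in>T. u k))\<^sup>2 \<ge> E/2})"
proof -
  define Z where "Z T = c + (\<Sum>k\<in>T. u k)" for T
  define G where "G = {T\<in>Pow K. (Z T)\<^sup>2 \<ge> E/2}"
  define N :: real where "N = 2 ^ card K"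
  have finP: "finite (Pow K)" using K by simp
  have GP: "G \<subseteq> Pow K" unfolding G_def by auto
  have cardP: "real (card (Pow K)) = N" unfolding N_def using K by (simp add: card_Pow)
  have s2: "(\<Sum>T\<in>Pow K. (Z T)\<^sup>2) = N * E"
    unfolding Z_def N_def E_def using subset_m2[OF K] by simp
  define y where "y = c + (\<Sum>k\<in>K. u k)/2"
  define S where "S = (\<Sum>k\<in>K. (u k/2)\<^sup>2)"
  have "(\<Sum>T\<in>Pow K. (Z T)^4) = N * (y^4 + 6 * y\<^sup>2 * S + 3 * S\<^sup>2 - 2 * (\<Sum>k\<in>K. (u k/2)^4))"
    unfolding Z_def N_def y_def S_def using subset_m4[OF K] by simp
  also have "\<dots> \<le> N * (3 * E\<^sup>2)"
  proof -
    have "0 \<le> (\<Sum>k\<in>K. (u k/2)^4)" by (intro sum_nonneg) auto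
    moreover have "E = y\<^sup>2 + S" unfolding E_def y_def S_def by simp
    moreover have "0 \<le> S" unfolding S_def by (intro sum_nonneg) auto
    moreover have "N > 0" unfolding N_def by simp
    moreover have "0 \<le> y^4" by simp
    moreover have D: "3 * E\<^sup>2 - (y^4 + 6 * y\<^sup>2 * S + 3 * S\<^sup>2 - 2 * (\<Sum>k\<in>K. (u k/2)^4)) = 2 * y^4 + 2 * (\<Sum>k\<in>K. (u k/2)^4)"
      unfolding \<open>E = y\<^sup>2 + S\<close> by (simp add: power2_eq_square power4_eq_xxxx algebra_simps)
    ultimately have "y^4 + 6 * y\<^sup>2 * S + 3 * S\<^sup>2 - 2 * (\<Sum>k\<in>K. (u k/2)^4) \<le> 3 * E\<^sup>2"
      by linarith
    thus ?thesis using \<open>N > 0\<close> by (intro mult_left_mono) auto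
  qed
  finally have s4: "(\<Sum>T\<in>Pow K. (Z T)^4) \<le> N * (3 * E\<^sup>2)" .
  have split: "(\<Sum>T\<in>Pow K. (Z T)\<^sup>2) = (\<Sum>T\<in>G. (Z T)\<^sup>2) + (\<Sum>T\<in>Pow K - G. (Z T)\<^sup>2)"
    using sum.subset_diff[OF GP finP, of "\<lambda>T. (Z T)\<^sup>2"] by simp
  have "(\<Sum>T\<in>Pow K - G. (Z T)\<^sup>2) \<le> (\<Sum>T\<in>Pow K - G. E/2)"
    by (rule sum_mono) (auto simp: G_def)
  also have "\<dots> \<le> N * (E/2)"
  proof -
    have "card (Pow K - G) \<le> card (Pow K)" by (rule card_mono[OF finP]) auto
    hence "real (card (Pow K - G)) \<le> N" using cardP by linarith
    thus ?thesis using Epos by (simp add: mult_right_mono)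
  qed
  finally have lowG: "N * E / 2 \<le> (\<Sum>T\<in>G. (Z T)\<^sup>2)" using s2 split by linarith
  have cs: "(\<Sum>T\<in>G. 1 * (Z T)\<^sup>2)\<^sup>2 \<le> (\<Sum>T\<in>G. 1\<^sup>2) * (\<Sum>T\<in>G. ((Z T)\<^sup>2)\<^sup>2)"
    by (rule Cauchy_Schwarz_ineq_sum)
  have "(\<Sum>T\<in>G. ((Z T)\<^sup>2)\<^sup>2) = (\<Sum>T\<in>G. (Z T)^4)" by (simp flip: power_mult)
  also have "\<dots> \<le> (\<Sum>T\<in>Pow K. (Z T)^4)"
    by (rule sum_mono2[OF finP GP]) auto
  finally have "(\<Sum>T\<in>G. ((Z T)\<^sup>2)\<^sup>2) \<le> (\<Sum>T\<in>Pow K. (Z T)^4)" .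
  hence "(\<Sum>T\<in>G. (Z T)\<^sup>2)\<^sup>2 \<le> real (card G) * (N * (3 * E\<^sup>2))"
    using cs s4 by (simp, meson mult_left_mono of_nat_0_le_iff order_trans)
  moreover have "(N * E / 2)\<^sup>2 \<le> (\<Sum>T\<in>G. (Z T)\<^sup>2)\<^sup>2"
    using lowG Epos by (intro power_mono) (auto simp: N_def)
  ultimately have "(N * E / 2)\<^sup>2 \<le> real (card G) * (N * (3 * E\<^sup>2))" by linarith
  hence "N * N * (E * E) \<le> (12 * real (card G)) * N * (E * E)"
    by (simp add: power2_eq_square algebra_simps)
  moreover have "N * (E * E) > 0" using Epos by (simp add: N_def)
  ultimately have "N \<le> 12 * real (card G)"
    by (metis mult.assoc mult.commute mult_le_cancel_left_pos)
  thus ?thesis unfolding N_def G_def Z_def by simp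
qed



abbreviation ZR where "ZR \<equiv> zero_one_rows"

lemma ZR_01: "x \<in> ZR n d \<Longrightarrow> x j = 0 \<or> x j = 1"
  and ZR_out: "x \<in> ZR n d \<Longrightarrow> n \<le> j \<Longrightarrow> x j = 0"
  and ZR_card: "x \<in> ZR n d \<Longrightarrow> card {j. j < n \<and> x j = 1} = d"
  by (auto simp: zero_one_rows_def)

lemma ZR_sq: "x \<in> ZR n d \<Longrightarrow> x j * x j = x j"
  using ZR_01[of x n d j] by auto

lemma ZR_sum: assumes "x \<in> ZR n d" shows "(\<Sum>j<n. x j) = real d"
proof -
  have "(\<Sum>j<n. x j) = (\<Sum>j<n. of_bool (x j = 1))"
    by (rule sum.cong) (use ZR_01[OF assms] in auto)
  also have "\<dots> = real (card ({..<n} \<inter> {j. x j = 1}))"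
    by (subst sum_of_bool_eq) auto
  also have "{..<n} \<inter> {j. x j = 1} = {j. j < n \<and> x j = 1}" by auto
  finally show ?thesis using ZR_card[OF assms] by simp
qed

lemma ZR_finite: "finite (ZR n d)"
proof -
  have "ZR n d \<subseteq> PiE_dflt {..<n} 0 (\<lambda>_. {0,1})"
    by (auto simp: zero_one_rows_def PiE_dflt_def)
  moreover have "finite (PiE_dflt {..<n} (0::real) (\<lambda>_. {0,1}))" by (intro finite_PiE_dflt) auto
  ultimately show ?thesis by (rule finite_subset)
qed

lemma ZR_nonempty: assumes "d \<le> n" shows "ZR n d \<noteq> {}"
proof -
  have "(\<lambda>j. if j < d then 1 else 0 :: real) \<in> ZR n d"
  proof -
    have "{j. j < n \<and> (if j < d then 1 else 0::real) = 1} = {..<d}" using assms by auto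
    thus ?thesis using assms by (auto simp: zero_one_rows_def)
  qed
  thus ?thesis by auto
qed

lemma ZR_card_pos: "d \<le> n \<Longrightarrow> card (ZR n d) > 0"
  using ZR_finite ZR_nonempty by (simp add: card_gt_0_iff)

definition invol_on :: "nat \<Rightarrow> (nat \<Rightarrow> nat) \<Rightarrow> bool" where
  "invol_on n \<sigma> \<longleftrightarrow> (\<forall>j. \<sigma> (\<sigma> j) = j) \<and> (\<forall>j. \<sigma> j < n \<longleftrightarrow> j < n)"

lemma invol_mem: assumes "invol_on n \<sigma>" "x \<in> ZR n d" shows "x \<circ> \<sigma> \<in> ZR n d"
proof -
  have s1: "\<And>j. \<sigma> (\<sigma> j) = j" and s2: "\<And>j. \<sigma> j < n \<longleftrightarrow> j < n"
    using assms(1) by (auto simp: invol_on_def)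
  have inj: "inj \<sigma>" by (metis s1 injI)
  have "{j. j < n \<and> x (\<sigma> j) = 1} = \<sigma> ` {j. j < n \<and> x j = 1}"
  proof
    show "{j. j < n \<and> x (\<sigma> j) = 1} \<subseteq> \<sigma> ` {j. j < n \<and> x j = 1}"
    proof
      fix j assume "j \<in> {j. j < n \<and> x (\<sigma> j) = 1}"
      hence "\<sigma> j \<in> {j. j < n \<and> x j = 1}" using s2 by auto
      thus "j \<in> \<sigma> ` {j. j < n \<and> x j = 1}" by (metis s1 image_eqI)
    qed
    show "\<sigma> ` {j. j < n \<and> x j = 1} \<subseteq> {j. j < n \<and> x (\<sigma> j) = 1}"
      using s1 s2 by auto
  qed
  hence "card {j. j < n \<and> x (\<sigma> j) = 1} = card {j. j < n \<and> x j = 1}"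
    using inj by (simp add: card_image inj_on_subset)
  thus ?thesis using assms(2) s2 by (auto simp: zero_one_rows_def) (meson not_le)
qed

lemma invol_sum:
  assumes "invol_on n \<sigma>"
  shows "(\<Sum>x\<in>ZR n d. g x) = (\<Sum>x\<in>ZR n d. g (x \<circ> \<sigma>))"
proof -
  have s1: "\<And>j. \<sigma> (\<sigma> j) = j" using assms by (auto simp: invol_on_def)
  show ?thesis
    by (rule sum.reindex_bij_witness[where i="\<lambda>x. x \<circ> \<sigma>" and j="\<lambda>x. x \<circ> \<sigma>"])
       (auto simp: o_def s1 invol_mem[OF assms, unfolded o_def])
qed

definition tr :: "nat \<Rightarrow> nat \<Rightarrow> nat \<Rightarrow> nat" where
  "tr a b j = (if j = a then b else if j = b then a else j)"

lemma tr_invol: "a < n \<Longrightarrow> b < n \<Longrightarrow> invol_on n (tr a b)"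
  by (auto simp: invol_on_def tr_def)

lemma coord_sum:
  assumes "j < n" "d \<le> n"
  shows "(\<Sum>x\<in>ZR n d. x j) = real d * card (ZR n d) / n"
proof -
  have eq: "(\<Sum>x\<in>ZR n d. x i) = (\<Sum>x\<in>ZR n d. x j)" if "i < n" for i
    using invol_sum[OF tr_invol[OF \<open>i<n\<close> \<open>j<n\<close>], where d=d and g="\<lambda>x. x i"] by (simp add: tr_def)
  have "(\<Sum>i<n. \<Sum>x\<in>ZR n d. x i) = (\<Sum>x\<in>ZR n d. \<Sum>i<n. x i)" by (rule sum.swap)
  also have "\<dots> = (\<Sum>x\<in>ZR n d. real d)" by (rule sum.cong) (auto simp: ZR_sum)
  finally have "real n * (\<Sum>x\<in>ZR n d. x j) = real d * card (ZR n d)"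
    using eq by simp
  moreover have "n > 0" using assms by simp
  ultimately show ?thesis by (simp add: field_simps)
qed

lemma pair_sum:
  assumes "a < n" "b < n" "a \<noteq> b" "d \<le> n"
  shows "(\<Sum>x\<in>ZR n d. x a * (1 - x b)) = real d * (real n - real d) * card (ZR n d) / (real n * (real n - 1))"
proof -
  have eq: "(\<Sum>x\<in>ZR n d. x a * (1 - x i)) = (\<Sum>x\<in>ZR n d. x a * (1 - x b))" if "i \<in> {..<n} - {a}" for i
  proof -
    have "i < n" "i \<noteq> a" using that by auto
    have "tr i b a = a" using \<open>i \<noteq> a\<close> assms(3) by (simp add: tr_def)
    moreover have "tr i b i = b" by (simp add: tr_def)
    ultimately show ?thesis
      using invol_sum[OF tr_invol[OF \<open>i<n\<close> \<open>b<n\<close>], where d=d and g="\<lambda>x. x a * (1 - x i)"]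
      by (simp only: o_def \<open>tr i b a = a\<close> \<open>tr i b i = b\<close>)
  qed
  have inner: "(\<Sum>i\<in>{..<n} - {a}. x a * (1 - x i)) = x a * (real n - real d)" if x: "x \<in> ZR n d" for x
  proof -
    have "(\<Sum>i\<in>{..<n} - {a}. x a * (1 - x i)) = x a * (\<Sum>i\<in>{..<n} - {a}. (1 - x i))"
      by (rule sum_distrib_left[symmetric])
    also have "(\<Sum>i\<in>{..<n} - {a}. (1 - x i)) = (\<Sum>i\<in>{..<n} - {a}. 1) - (\<Sum>i\<in>{..<n} - {a}. x i)"
      by (rule sum_subtractf)
    also have "(\<Sum>i\<in>{..<n} - {a}. x i) = (\<Sum>i<n. x i) - x a"
      using assms(1) by (subst sum_diff1) (auto simp only: lessThan_iff if_True)
    also have "(\<Sum>i\<in>{..<n} - {a}. (1::real)) = real n - 1"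
      using assms(1) by simp
    finally have "(\<Sum>i\<in>{..<n} - {a}. x a * (1 - x i)) = x a * ((real n - 1) - (real d - x a))"
      using ZR_sum[OF x] by simp
    moreover have "x a * ((real n - 1) - (real d - x a)) = x a * (real n - real d)"
      using ZR_01[OF x, of a] by auto
    ultimately show ?thesis by simp
  qed
  have "(\<Sum>i\<in>{..<n} - {a}. \<Sum>x\<in>ZR n d. x a * (1 - x i)) = (\<Sum>x\<in>ZR n d. \<Sum>i\<in>{..<n} - {a}. x a * (1 - x i))"
    by (rule sum.swap)
  also have "\<dots> = (\<Sum>x\<in>ZR n d. x a * (real n - real d))"
    by (rule sum.cong) (simp_all add: inner)
  also have "\<dots> = (\<Sum>x\<in>ZR n d. x a) * (real n - real d)"
    by (simp add: sum_distrib_right)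
  finally have 1: "(\<Sum>i\<in>{..<n} - {a}. \<Sum>x\<in>ZR n d. x a * (1 - x i)) = (\<Sum>x\<in>ZR n d. x a) * (real n - real d)" .
  have "(\<Sum>i\<in>{..<n} - {a}. \<Sum>x\<in>ZR n d. x a * (1 - x i)) = (\<Sum>i\<in>{..<n} - {a}. \<Sum>x\<in>ZR n d. x a * (1 - x b))"
    by (rule sum.cong) (simp_all only: eq)
  also have "\<dots> = (real n - 1) * (\<Sum>x\<in>ZR n d. x a * (1 - x b))"
    using assms(1) by simp
  finally have H: "(real n - 1) * (\<Sum>x\<in>ZR n d. x a * (1 - x b)) = real d * card (ZR n d) / n * (real n - real d)"
    using 1 coord_sum[OF assms(1,4)] by simp
  have "real n - 1 > 0" using assms by linarith
  have "(\<Sum>x\<in>ZR n d. x a * (1 - x b)) * (real n * (real n - 1)) = real n * ((real n - 1) * (\<Sum>x\<in>ZR n d. x a * (1 - x b)))"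
    by (simp only: mult_ac)
  also have "\<dots> = real d * (real n - real d) * card (ZR n d)" unfolding H using assms(1) by simp
  finally have "(\<Sum>x\<in>ZR n d. x a * (1 - x b)) * (real n * (real n - 1)) = real d * (real n - real d) * card (ZR n d)"
    .
  moreover have "real n * (real n - 1) > 0" using \<open>real n - 1 > 0\<close> by simp
  ultimately show ?thesis by (subst eq_divide_eq) auto
qed

lemma split_sum:
  assumes "a < n" "b < n" "a \<noteq> b" "d \<le> n"
  shows "(\<Sum>x\<in>ZR n d. (x a - x b)\<^sup>2) = 2 * real d * (real n - real d) * card (ZR n d) / (real n * (real n - 1))"
proof -
  have "(\<Sum>x\<in>ZR n d. (x a - x b)\<^sup>2) = (\<Sum>x\<in>ZR n d. x a * (1 - x b)) + (\<Sum>x\<in>ZR n d. x b * (1 - x a))"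
    unfolding sum.distrib[symmetric]
    by (rule sum.cong) (auto simp: power2_eq_square algebra_simps ZR_sq)
  thus ?thesis using pair_sum[OF assms(1,2,3,4)] pair_sum[OF assms(2,1) _ assms(4)] assms(3)
    by (simp add: field_simps)
qed



lemma matching:
  fixes v :: "nat \<Rightarrow> real"
  assumes n1: "n \<ge> 1"
  obtains a b :: "nat \<Rightarrow> nat" and L :: nat and med :: real where
    "inj_on a {..<L}" "inj_on b {..<L}" "a ` {..<L} \<inter> b ` {..<L} = {}"
    "\<forall>k<L. a k < n" "\<forall>k<L. b k < n"
    "(\<Sum>j<n. (v j - med)\<^sup>2) \<le> (\<Sum>k<L. (v (a k) - v (b k))\<^sup>2)"
proof -
  define xs where "xs = sort_key v [0..<n]"
  have len: "length xs = n" and dist: "distinct xs" and st: "set xs = {..<n}"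
    and sorted: "sorted (map v xs)" unfolding xs_def by auto
  define s where "s i = xs ! i" for i
  have bij: "bij_betw s {..<n} {..<n}"
    unfolding s_def[abs_def] by (rule bij_betw_nth) (use len dist st in auto)
  have injs: "inj_on s {..<n}" using bij by (rule bij_betw_imp_inj_on)
  have sr: "s i < n" if "i < n" for i using bij that by (auto dest: bij_betw_apply)
  have mono: "v (s i) \<le> v (s j)" if "i \<le> j" "j < n" for i j
    using sorted_nth_mono[OF sorted, of i j] that len by (simp add: s_def)
  define L where "L = n div 2"
  define h where "h = n - L"
  have hL: "L \<le> h" "h + L = n" "h \<le> L + 1" "1 \<le> h" using n1 unfolding h_def L_def by auto
  define med where "med = v (s (h - 1))"
  define a where "a k = s k" for k
  define b where "b k = s (k + h)" for k
  have ia: "inj_on a {..<L}" unfolding a_def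
    by (rule inj_on_subset[OF injs]) (use hL in auto)
  have ib: "inj_on b {..<L}"
  proof (rule inj_onI)
    fix x y assume "x \<in> {..<L}" "y \<in> {..<L}" "b x = b y"
    hence "x + h = y + h" using injs hL unfolding b_def inj_on_def
      by (metis add.commute add_less_cancel_left lessThan_iff)
    thus "x = y" by simp
  qed
  have disj: "a ` {..<L} \<inter> b ` {..<L} = {}"
  proof -
    { fix k k' assume "k < L" "k' < L" "s k = s (k' + h)"
      hence "k = k' + h" using injs hL by (auto simp: inj_on_def)
      hence False using \<open>k < L\<close> hL by auto }
    thus ?thesis unfolding a_def b_def by auto
  qed
  have ar: "\<forall>k<L. a k < n" and br: "\<forall>k<L. b k < n"
    unfolding a_def b_def using sr hL by auto
  define f where "f i = (v (s i) - med)\<^sup>2" for i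
  have "(\<Sum>j<n. (v j - med)\<^sup>2) = (\<Sum>i<n. f i)"
    unfolding f_def using sum.reindex_bij_betw[OF bij, of "\<lambda>j. (v j - med)\<^sup>2"] by simp
  also have "\<dots> = (\<Sum>i\<in>{..<L} \<union> (\<lambda>k. k + h) ` {..<L}. f i)"
  proof (rule sum.mono_neutral_right)
    show "{..<L} \<union> (\<lambda>k. k + h) ` {..<L} \<subseteq> {..<n}" using hL by auto
    show "\<forall>i\<in>{..<n} - ({..<L} \<union> (\<lambda>k. k + h) ` {..<L}). f i = 0"
    proof
      fix i assume i: "i \<in> {..<n} - ({..<L} \<union> (\<lambda>k. k + h) ` {..<L})"
      have "i = h - 1"
      proof (rule ccontr)
        assume "i \<noteq> h - 1"
        hence "i \<ge> h" using i hL by auto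
        hence "i \<in> (\<lambda>k. k + h) ` {..<L}" using i hL
          by (auto intro!: image_eqI[where x="i - h"])
        thus False using i by auto
      qed
      thus "f i = 0" unfolding f_def med_def by simp
    qed
  qed auto
  also have "\<dots> = (\<Sum>i<L. f i) + (\<Sum>i\<in>(\<lambda>k. k + h) ` {..<L}. f i)"
    by (rule sum.union_disjoint) (use hL in auto)
  also have "(\<Sum>i\<in>(\<lambda>k. k + h) ` {..<L}. f i) = (\<Sum>k<L. f (k + h))"
    by (subst sum.reindex) (auto simp: inj_on_def)
  also have "(\<Sum>i<L. f i) + (\<Sum>k<L. f (k + h)) = (\<Sum>k<L. f k + f (k + h))"
    by (simp add: sum.distrib)
  also have "\<dots> \<le> (\<Sum>k<L. (v (a k) - v (b k))\<^sup>2)"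
  proof (rule sum_mono)
    fix k assume "k \<in> {..<L}"
    hence k: "k < L" by simp
    have 1: "v (s k) \<le> med" unfolding med_def by (rule mono) (use k hL in auto)
    have 2: "med \<le> v (s (k + h))" unfolding med_def by (rule mono) (use k hL in auto)
    have "0 \<le> (med - v (s k)) * (v (s (k + h)) - med)" using 1 2 by simp
    thus "f k + f (k + h) \<le> (v (a k) - v (b k))\<^sup>2"
      unfolding f_def a_def b_def by (simp add: power2_eq_square algebra_simps)
  qed
  finally show ?thesis using that ia ib disj ar br by blast
qed

definition Xf :: "nat \<Rightarrow> (nat \<Rightarrow> real) \<Rightarrow> (nat \<Rightarrow> real) \<Rightarrow> real" where
  "Xf n v x = (\<Sum>j<n. x j * v j)"

definition sw :: "(nat \<Rightarrow> nat) \<Rightarrow> (nat \<Rightarrow> nat) \<Rightarrow> nat set \<Rightarrow> nat \<Rightarrow> nat" where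
  "sw a b T j = (if j \<in> a ` T then b (inv_into T a j) else if j \<in> b ` T then a (inv_into T b j) else j)"

locale pairing =
  fixes a b :: "nat \<Rightarrow> nat" and L n :: nat
  assumes ia: "inj_on a {..<L}" and ib: "inj_on b {..<L}"
    and disj: "a ` {..<L} \<inter> b ` {..<L} = {}"
    and ar: "\<forall>k<L. a k < n" and br: "\<forall>k<L. b k < n"
begin

lemma sw_a: "T \<subseteq> {..<L} \<Longrightarrow> k \<in> T \<Longrightarrow> sw a b T (a k) = b k"
  using inj_on_subset[OF ia] by (auto simp: sw_def)

lemma sw_b: assumes "T \<subseteq> {..<L}" "k \<in> T" shows "sw a b T (b k) = a k"
proof -
  have "b k \<notin> a ` T" using disj assms by auto
  thus ?thesis using inj_on_subset[OF ib] assms by (auto simp: sw_def)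
qed

lemma sw_other: "j \<notin> a ` T \<Longrightarrow> j \<notin> b ` T \<Longrightarrow> sw a b T j = j"
  by (auto simp: sw_def)

lemma sw_invol: assumes T: "T \<subseteq> {..<L}" shows "invol_on n (sw a b T)"
proof -
  have 1: "sw a b T (sw a b T j) = j" for j
  proof (cases "j \<in> a ` T")
    case True
    then obtain k where "k \<in> T" "j = a k" by auto
    thus ?thesis using sw_a[OF T] sw_b[OF T] by simp
  next
    case False
    show ?thesis
    proof (cases "j \<in> b ` T")
      case True
      then obtain k where "k \<in> T" "j = b k" by auto
      thus ?thesis using sw_a[OF T] sw_b[OF T] by simp
    next
      case False
      thus ?thesis using \<open>j \<notin> a ` T\<close> sw_other by simp
    qed
  qed
  have 2: "sw a b T j < n \<longleftrightarrow> j < n" for j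
  proof (cases "j \<in> a ` T \<or> j \<in> b ` T")
    case True
    then obtain k where k: "k \<in> T" "j = a k \<or> j = b k" by auto
    hence "k < L" using T by auto
    thus ?thesis using k sw_a[OF T] sw_b[OF T] ar br by auto
  next
    case False
    thus ?thesis using sw_other by simp
  qed
  show ?thesis unfolding invol_on_def using 1 2 by blast
qed

lemma Xf_sw:
  assumes T: "T \<subseteq> {..<L}"
  shows "Xf n v (x \<circ> sw a b T) = Xf n v x + (\<Sum>k\<in>T. (x (a k) - x (b k)) * (v (b k) - v (a k)))"
proof -
  let ?s = "sw a b T"
  have fT: "finite T" using T finite_subset by blast
  have iaT: "inj_on a T" and ibT: "inj_on b T" using inj_on_subset[OF ia T] inj_on_subset[OF ib T] .
  have AB: "a ` T \<union> b ` T \<subseteq> {..<n}" using T ar br by auto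
  have dj: "a ` T \<inter> b ` T = {}" using disj T by auto
  have "Xf n v (x \<circ> ?s) - Xf n v x = (\<Sum>j<n. (x (?s j) - x j) * v j)"
    unfolding Xf_def by (simp add: sum_subtractf left_diff_distrib)
  also have "\<dots> = (\<Sum>j\<in>a ` T \<union> b ` T. (x (?s j) - x j) * v j)"
    by (rule sum.mono_neutral_right) (use AB sw_other in auto)
  also have "\<dots> = (\<Sum>j\<in>a ` T. (x (?s j) - x j) * v j) + (\<Sum>j\<in>b ` T. (x (?s j) - x j) * v j)"
    by (rule sum.union_disjoint) (use fT dj in auto)
  also have "(\<Sum>j\<in>a ` T. (x (?s j) - x j) * v j) = (\<Sum>k\<in>T. (x (b k) - x (a k)) * v (a k))"
    by (subst sum.reindex[OF iaT]) (auto intro!: sum.cong simp: sw_a[OF T])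
  also have "(\<Sum>j\<in>b ` T. (x (?s j) - x j) * v j) = (\<Sum>k\<in>T. (x (a k) - x (b k)) * v (b k))"
    by (subst sum.reindex[OF ibT]) (auto intro!: sum.cong simp: sw_b[OF T])
  also have "(\<Sum>k\<in>T. (x (b k) - x (a k)) * v (a k)) + (\<Sum>k\<in>T. (x (a k) - x (b k)) * v (b k))
      = (\<Sum>k\<in>T. (x (a k) - x (b k)) * (v (b k) - v (a k)))"
    by (simp add: sum.distrib[symmetric] algebra_simps)
  finally show ?thesis by (simp add: o_def algebra_simps)
qed

end


lemma sq_shift:
  fixes c w :: real
  assumes "w\<^sup>2 < (c/2)\<^sup>2"
  shows "(c/2)\<^sup>2 \<le> (c + w)\<^sup>2"
proof -
  have "\<bar>w\<bar>\<^sup>2 < \<bar>c/2\<bar>\<^sup>2" using assms by (simp only: power2_abs)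
  hence "\<bar>w\<bar> < \<bar>c/2\<bar>" by (rule power_less_imp_less_base) simp
  hence "\<bar>c/2\<bar> \<le> \<bar>c + w\<bar>" by linarith
  hence "\<bar>c/2\<bar>\<^sup>2 \<le> \<bar>c + w\<bar>\<^sup>2" by (rule power_mono) simp
  thus ?thesis by (simp only: power2_abs)
qed

lemma caseB:
  fixes v :: "nat \<Rightarrow> real" and t :: real
  assumes n1: "1 \<le> n" and d1: "1 \<le> d" and dn: "d \<le> n"
    and v1: "(\<Sum>j<n. (v j)\<^sup>2) = 1"
    and small: "(\<Sum>j<n. (v j - t)\<^sup>2) < 1/20"
  shows "real (card (ZR n d)) / 2 \<le> real (card {x\<in>ZR n d. (real d / real n)\<^sup>2 / 320 \<le> (Xf n v x)\<^sup>2})"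
proof -
  define Z where "Z = ZR n d"
  define w where "w j = v j - t" for j
  define Sw where "Sw = (\<Sum>j<n. (w j)\<^sup>2)"
  define W where "W x = (\<Sum>j<n. x j * w j)" for x :: "nat \<Rightarrow> real"
  have fZ: "finite Z" unfolding Z_def by (rule ZR_finite)
  have Sw: "Sw < 1/20" "0 \<le> Sw" using small unfolding Sw_def w_def by (auto intro: sum_nonneg)
  have "1 \<le> (\<Sum>j<n. 2 * (w j)\<^sup>2 + 2 * t\<^sup>2)"
  proof -
    have "(\<Sum>j<n. (v j)\<^sup>2) \<le> (\<Sum>j<n. 2 * (w j)\<^sup>2 + 2 * t\<^sup>2)"
    proof (rule sum_mono)
      fix j
      have "0 \<le> (w j - t)\<^sup>2" by simp
      thus "(v j)\<^sup>2 \<le> 2 * (w j)\<^sup>2 + 2 * t\<^sup>2" unfolding w_def by (simp add: power2_eq_square algebra_simps)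
    qed
    thus ?thesis using v1 by simp
  qed
  hence "1 \<le> 2 * Sw + 2 * real n * t\<^sup>2" unfolding Sw_def by (simp add: sum.distrib sum_distrib_left)
  hence nt: "9/20 \<le> real n * t\<^sup>2" using Sw by linarith
  have npos: "real n > 0" using n1 by simp
  have Xdec: "Xf n v x = real d * t + W x" if "x \<in> Z" for x
  proof -
    have "Xf n v x = (\<Sum>j<n. x j * w j + t * x j)" unfolding Xf_def w_def
      by (rule sum.cong) (auto simp: algebra_simps)
    also have "\<dots> = W x + t * (\<Sum>j<n. x j)" unfolding W_def by (simp add: sum.distrib sum_distrib_left)
    finally show ?thesis using ZR_sum[of x n d] that unfolding Z_def by simp
  qed
  have Wb: "(W x)\<^sup>2 \<le> real d * (\<Sum>j<n. x j * (w j)\<^sup>2)" if x: "x \<in> Z" for x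
  proof -
    have "(\<Sum>j<n. x j * (x j * w j)) = W x"
      unfolding W_def by (rule sum.cong) (use ZR_sq[of x n d] x in \<open>auto simp: Z_def mult.assoc[symmetric]\<close>)
    hence "(W x)\<^sup>2 = (\<Sum>j<n. x j * (x j * w j))\<^sup>2" by simp
    also have "\<dots> \<le> (\<Sum>j<n. (x j)\<^sup>2) * (\<Sum>j<n. (x j * w j)\<^sup>2)" by (rule Cauchy_Schwarz_ineq_sum)
    also have "(\<Sum>j<n. (x j)\<^sup>2) = (\<Sum>j<n. x j)"
      by (rule sum.cong) (use ZR_sq[of x n d] x in \<open>auto simp: Z_def power2_eq_square\<close>)
    also have "(\<Sum>j<n. x j) = real d"
      using ZR_sum[of x n d] x unfolding Z_def by simp
    also have "(\<Sum>j<n. (x j * w j)\<^sup>2) = (\<Sum>j<n. x j * (w j)\<^sup>2)"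
    proof (rule sum.cong)
      fix j
      have "x j * x j = x j" using ZR_sq[of x n d] x unfolding Z_def by blast
      thus "(x j * w j)\<^sup>2 = x j * (w j)\<^sup>2" by (simp add: power2_eq_square) (metis mult.assoc mult.commute)
    qed simp
    finally show ?thesis .
  qed
  have sumW: "(\<Sum>x\<in>Z. (W x)\<^sup>2) \<le> real d * real d * real (card Z) * Sw / real n"
  proof -
    have "(\<Sum>x\<in>Z. (W x)\<^sup>2) \<le> (\<Sum>x\<in>Z. real d * (\<Sum>j<n. x j * (w j)\<^sup>2))"
      by (rule sum_mono) (rule Wb)
    also have "\<dots> = real d * (\<Sum>j<n. (w j)\<^sup>2 * (\<Sum>x\<in>Z. x j))"
      by (simp add: sum_distrib_left sum_distrib_right sum.swap[of _ Z] mult.commute mult.left_commute)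
    also have "\<dots> = real d * (\<Sum>j<n. (w j)\<^sup>2 * (real d * real (card Z) / real n))"
      by (simp add: coord_sum[OF _ dn] Z_def)
    also have "\<dots> = real d * real d * real (card Z) * Sw / real n"
    proof -
      have "(\<Sum>j<n. (w j)\<^sup>2 * (real d * real (card Z) / real n)) = Sw * (real d * real (card Z) / real n)"
        unfolding Sw_def by (rule sum_distrib_right[symmetric])
      thus ?thesis by simp
    qed
    finally show ?thesis .
  qed
  define \<theta> where "\<theta> = (real d * t / 2)\<^sup>2"
  have "t \<noteq> 0" using nt by auto
  hence tpos: "t\<^sup>2 > 0" by simp
  have dpos: "real d > 0" using d1 by simp
  have thpos: "\<theta> > 0" unfolding \<theta>_def using tpos dpos by (simp add: power_mult_distrib)
  define Bad where "Bad = {x\<in>Z. \<theta> \<le> (W x)\<^sup>2}"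
  have "real (card Bad) * \<theta> = (\<Sum>x\<in>Bad. \<theta>)" by simp
  also have "\<dots> \<le> (\<Sum>x\<in>Bad. (W x)\<^sup>2)" by (rule sum_mono) (auto simp: Bad_def)
  also have "\<dots> \<le> (\<Sum>x\<in>Z. (W x)\<^sup>2)" by (rule sum_mono2[OF fZ]) (auto simp: Bad_def)
  finally have cb: "real (card Bad) * \<theta> \<le> real d * real d * real (card Z) * Sw / real n"
    using sumW by linarith
  have "real (card Bad) * \<theta> \<le> real (card Z) / 2 * \<theta>"
  proof -
    have "real d * real d * real (card Z) * Sw / real n \<le> real (card Z) / 2 * \<theta>"
    proof -
      have "real d * real d * real (card Z) * Sw / real n * real n = real d * real d * real (card Z) * Sw"
        using npos by simp
      also have "\<dots> \<le> real d * real d * real (card Z) * (1/20)"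
        using Sw by (intro mult_left_mono) auto
      also have "\<dots> \<le> real (card Z) / 2 * \<theta> * real n"
      proof -
        have "real (card Z) / 2 * \<theta> * real n = real d * real d * real (card Z) * ((real n * t\<^sup>2) / 8)"
          unfolding \<theta>_def by (simp add: power2_eq_square)
        moreover have "real d * real d * real (card Z) * (1/20) \<le> real d * real d * real (card Z) * ((real n * t\<^sup>2) / 8)"
          by (rule mult_left_mono) (use nt in auto)
        ultimately show ?thesis by linarith
      qed
      finally show ?thesis using npos by (simp add: divide_le_eq mult.commute mult.left_commute mult.assoc)
    qed
    thus ?thesis using cb by linarith
  qed
  hence cbad: "real (card Bad) \<le> real (card Z) / 2" using thpos by simp
  have sub: "Z - Bad \<subseteq> {x\<in>Z. (real d / real n)\<^sup>2 / 320 \<le> (Xf n v x)\<^sup>2}"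
  proof
    fix x assume x: "x \<in> Z - Bad"
    hence "(W x)\<^sup>2 < (real d * t / 2)\<^sup>2" unfolding Bad_def \<theta>_def by auto
    hence "(real d * t / 2)\<^sup>2 \<le> (Xf n v x)\<^sup>2" using sq_shift[of "W x" "real d * t"] Xdec x by auto
    moreover have "(real d / real n)\<^sup>2 / 320 \<le> (real d * t / 2)\<^sup>2"
    proof -
      have "(real d * t / 2)\<^sup>2 = (real d / real n)\<^sup>2 * (real n * (real n * t\<^sup>2)) / 4"
        using npos by (simp add: power2_eq_square field_simps)
      moreover have "9/20 \<le> real n * (real n * t\<^sup>2)"
      proof -
        have "1 * (real n * t\<^sup>2) \<le> real n * (real n * t\<^sup>2)"
          by (rule mult_right_mono) (use n1 in auto)
        thus ?thesis using nt by linarith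
      qed
      hence "(real d / real n)\<^sup>2 * 1 \<le> (real d / real n)\<^sup>2 * (80 * (real n * (real n * t\<^sup>2)))"
        by (intro mult_left_mono) auto
      ultimately show ?thesis by linarith
    qed
    ultimately show "x \<in> {x\<in>Z. (real d / real n)\<^sup>2 / 320 \<le> (Xf n v x)\<^sup>2}" using x by auto
  qed
  have "real (card Z) - real (card Bad) \<le> real (card (Z - Bad))"
    using card_Diff_subset[of Bad Z] fZ by (simp add: Bad_def card_mono finite_subset)
  also have "\<dots> \<le> real (card {x\<in>Z. (real d / real n)\<^sup>2 / 320 \<le> (Xf n v x)\<^sup>2})"
    using card_mono[OF _ sub] fZ by simp
  finally show ?thesis using cbad unfolding Z_def by linarith
qed


lemma card_of_bool: "finite A \<Longrightarrow> (\<Sum>x\<in>A. (of_bool (P x) :: real)) = real (card {x\<in>A. P x})"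
proof -
  assume "finite A"
  moreover have "A \<inter> Collect P = {x\<in>A. P x}" by auto
  ultimately show ?thesis by (simp add: sum_of_bool_eq)
qed

lemma (in pairing) caseA:
  fixes v :: "nat \<Rightarrow> real"
  assumes n2: "2 \<le> n" and d1: "1 \<le> d" and d2: "2 * d \<le> n"
    and Dbig: "1/20 \<le> (\<Sum>k<L. (v (a k) - v (b k))\<^sup>2)"
  shows "(real d / real n) / 24 * real (card (ZR n d)) \<le> real (card {x\<in>ZR n d. (real d / real n)\<^sup>2 / 320 \<le> (Xf n v x)\<^sup>2})"
proof -
  define p where "p = real d / real n"
  define Z where "Z = ZR n d"
  define K where "K = {..<L}"
  define D where "D = (\<Sum>k<L. (v (a k) - v (b k))\<^sup>2)"
  define u where "u x k = (x (a k) - x (b k)) * (v (b k) - v (a k))" for x :: "nat \<Rightarrow> real" and k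
  define Wt where "Wt x = (\<Sum>k<L. (u x k)\<^sup>2)" for x
  define good where "good y = (p\<^sup>2 / 320 \<le> (Xf n v y)\<^sup>2)" for y
  define G1 where "G1 = {x\<in>Z. p * D / 2 \<le> Wt x}"
  have fZ: "finite Z" unfolding Z_def by (rule ZR_finite)
  have fK: "finite K" unfolding K_def by simp
  have npos: "real n > 0" using n2 by simp
  have p01: "0 < p" "p \<le> 1" unfolding p_def using d1 d2 npos by (auto simp: divide_le_eq)
  have Dpos: "D > 0" using Dbig unfolding D_def by linarith
  have ab: "a k \<noteq> b k" if "k < L" for k using disj that by auto
  have sp: "p * real (card Z) \<le> 2 * real d * (real n - real d) * real (card Z) / (real n * (real n - 1))"
  proof -
    have n1: "real n - 1 > 0" using n2 by simp
    have "2 * real d \<le> real n" using d2 by (metis of_nat_le_iff of_nat_mult of_nat_numeral)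
    hence "real n - 1 \<le> 2 * (real n - real d)" by (simp add: algebra_simps)
    hence "real d * (real n - 1) \<le> real d * (2 * (real n - real d))" by (rule mult_left_mono) simp
    hence "real d * (real n - 1) \<le> 2 * real d * (real n - real d)" by (simp add: algebra_simps)
    moreover have "p * (real n * (real n - 1)) = real d * (real n - 1)"
      unfolding p_def using npos by simp
    ultimately have "p * (real n * (real n - 1)) \<le> 2 * real d * (real n - real d)" by linarith
    hence "p \<le> 2 * real d * (real n - real d) / (real n * (real n - 1))"
      using npos n1 by (simp add: le_divide_eq)
    hence "p * real (card Z) \<le> 2 * real d * (real n - real d) / (real n * (real n - 1)) * real (card Z)"
      by (rule mult_right_mono) simp
    thus ?thesis by simp
  qed
  have sumWt: "p * real (card Z) * D \<le> (\<Sum>x\<in>Z. Wt x)"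
  proof -
    have "(\<Sum>x\<in>Z. Wt x) = (\<Sum>k<L. (v (b k) - v (a k))\<^sup>2 * (\<Sum>x\<in>Z. (x (a k) - x (b k))\<^sup>2))"
      unfolding Wt_def u_def by (simp add: sum.swap[of _ Z] sum_distrib_left power_mult_distrib mult.commute)
    also have "\<dots> = (\<Sum>k<L. (v (b k) - v (a k))\<^sup>2 * (2 * real d * (real n - real d) * real (card Z) / (real n * (real n - 1))))"
      by (rule sum.cong) (use ar br ab d2 in \<open>auto simp: Z_def split_sum\<close>)
    also have "\<dots> \<ge> (\<Sum>k<L. (v (b k) - v (a k))\<^sup>2 * (p * real (card Z)))"
      by (rule sum_mono) (rule mult_left_mono[OF sp], simp)
    also have "(\<Sum>k<L. (v (b k) - v (a k))\<^sup>2 * (p * real (card Z))) = D * (p * real (card Z))"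
      unfolding D_def by (simp add: sum_distrib_right[symmetric] power2_commute)
    finally show ?thesis by (simp add: mult.commute mult.left_commute)
  qed
  have WtD: "Wt x \<le> D" if x: "x \<in> Z" for x
    unfolding Wt_def D_def
  proof (rule sum_mono)
    fix k
    have "(x (a k) - x (b k))\<^sup>2 \<le> 1"
      using ZR_01[of x n d "a k"] ZR_01[of x n d "b k"] x unfolding Z_def by auto
    hence "(x (a k) - x (b k))\<^sup>2 * (v (b k) - v (a k))\<^sup>2 \<le> 1 * (v (b k) - v (a k))\<^sup>2"
      by (rule mult_right_mono) simp
    thus "(u x k)\<^sup>2 \<le> (v (a k) - v (b k))\<^sup>2" unfolding u_def by (simp add: power_mult_distrib power2_commute)
  qed
  have G1card: "p * real (card Z) / 2 \<le> real (card G1)"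
  proof -
    have G1Z: "G1 \<subseteq> Z" unfolding G1_def by auto
    have "(\<Sum>x\<in>Z. Wt x) = (\<Sum>x\<in>G1. Wt x) + (\<Sum>x\<in>Z - G1. Wt x)"
      using sum.subset_diff[OF G1Z fZ, of Wt] by simp
    also have "(\<Sum>x\<in>G1. Wt x) \<le> (\<Sum>x\<in>G1. D)" by (rule sum_mono) (use WtD G1Z in auto)
    also have "(\<Sum>x\<in>Z - G1. Wt x) \<le> (\<Sum>x\<in>Z - G1. p * D / 2)" by (rule sum_mono) (auto simp: G1_def)
    also have "(\<Sum>x\<in>Z - G1. p * D / 2) \<le> (\<Sum>x\<in>Z. p * D / 2)"
      by (rule sum_mono2[OF fZ]) (use p01 Dpos in auto)
    finally have "p * real (card Z) * D \<le> real (card G1) * D + real (card Z) * (p * D / 2)"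
      using sumWt by simp
    hence "(p * real (card Z) / 2) * D \<le> real (card G1) * D" by (simp add: algebra_simps)
    thus ?thesis using Dpos by simp
  qed
  have step3: "(2::real) ^ card K \<le> 12 * real (card {T\<in>Pow K. good (x \<circ> sw a b T)})" if x: "x \<in> G1" for x
  proof -
    define c where "c = Xf n v x"
    define E where "E = (c + (\<Sum>k\<in>K. u x k)/2)\<^sup>2 + (\<Sum>k\<in>K. (u x k/2)\<^sup>2)"
    have "Wt x / 4 = (\<Sum>k\<in>K. (u x k/2)\<^sup>2)"
      unfolding Wt_def K_def by (simp add: sum_divide_distrib power_divide)
    hence EW: "Wt x / 4 \<le> E" unfolding E_def by simp
    have "p * D / 2 \<le> Wt x" using x unfolding G1_def by simp
    hence E1: "p * D / 8 \<le> E" using EW by linarith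
    have "p * D > 0" using p01 Dpos by simp
    hence Epos: "E > 0" using E1 by linarith
    have pz: "(2::real) ^ card K \<le> 12 * real (card {T\<in>Pow K. (c + (\<Sum>k\<in>T. u x k))\<^sup>2 \<ge> E/2})"
      using pz_subsets[OF fK, of c "u x"] Epos unfolding E_def by simp
    have "{T\<in>Pow K. (c + (\<Sum>k\<in>T. u x k))\<^sup>2 \<ge> E/2} \<subseteq> {T\<in>Pow K. good (x \<circ> sw a b T)}"
    proof safe
      fix T assume T: "T \<subseteq> K" and h: "E / 2 \<le> (c + (\<Sum>k\<in>T. u x k))\<^sup>2"
      have TL: "T \<subseteq> {..<L}" using T unfolding K_def .
      have "Xf n v (x \<circ> sw a b T) = c + (\<Sum>k\<in>T. u x k)"
        unfolding c_def u_def using Xf_sw[OF TL] by simp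
      moreover have "p\<^sup>2 / 320 \<le> E / 2"
      proof -
        have "p\<^sup>2 \<le> p" using p01 by (simp add: power2_eq_square mult_le_cancel_left1)
        moreover have "p / 20 \<le> p * D" using Dbig p01 unfolding D_def
          by (metis mult.right_neutral mult_left_mono order_less_imp_le times_divide_eq_right)
        ultimately show ?thesis using E1 by linarith
      qed
      ultimately show "good (x \<circ> sw a b T)" unfolding good_def using h by simp
    qed
    hence "card {T\<in>Pow K. (c + (\<Sum>k\<in>T. u x k))\<^sup>2 \<ge> E/2} \<le> card {T\<in>Pow K. good (x \<circ> sw a b T)}"
      by (intro card_mono) (use fK in auto)
    thus ?thesis using pz by linarith
  qed
  have "(2::real) ^ card K * real (card {x\<in>Z. good x}) = (\<Sum>T\<in>Pow K. \<Sum>x\<in>Z. of_bool (good x))"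
    using fK card_of_bool[OF fZ, of good] by (simp add: card_Pow)
  also have "\<dots> = (\<Sum>T\<in>Pow K. \<Sum>x\<in>Z. of_bool (good (x \<circ> sw a b T)))"
  proof (rule sum.cong)
    fix T assume "T \<in> Pow K"
    hence "T \<subseteq> {..<L}" unfolding K_def by auto
    thus "(\<Sum>x\<in>Z. of_bool (good x)) = (\<Sum>x\<in>Z. of_bool (good (x \<circ> sw a b T)))"
      unfolding Z_def by (rule invol_sum[OF sw_invol])
  qed simp
  also have "\<dots> = (\<Sum>x\<in>Z. \<Sum>T\<in>Pow K. of_bool (good (x \<circ> sw a b T)))" by (rule sum.swap)
  also have "\<dots> = (\<Sum>x\<in>Z. real (card {T\<in>Pow K. good (x \<circ> sw a b T)}))"
    by (rule sum.cong[OF refl], rule card_of_bool) (use fK in simp)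
  also have "\<dots> \<ge> (\<Sum>x\<in>G1. real (card {T\<in>Pow K. good (x \<circ> sw a b T)}))"
    by (rule sum_mono2[OF fZ]) (auto simp: G1_def)
  also have "(\<Sum>x\<in>G1. real (card {T\<in>Pow K. good (x \<circ> sw a b T)})) \<ge> (\<Sum>x\<in>G1. (2::real) ^ card K / 12)"
    by (rule sum_mono) (use step3 in fastforce)
  also have "(\<Sum>x\<in>G1. (2::real) ^ card K / 12) = real (card G1) * 2 ^ card K / 12" by simp
  finally have "real (card G1) * 2 ^ card K / 12 \<le> (2::real) ^ card K * real (card {x\<in>Z. good x})" .
  moreover have "p * real (card Z) / 2 * 2 ^ card K / 12 \<le> real (card G1) * 2 ^ card K / 12"
    using G1card by (intro divide_right_mono mult_right_mono) auto
  ultimately have "p * real (card Z) / 2 * 2 ^ card K / 12 \<le> (2::real) ^ card K * real (card {x\<in>Z. good x})"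
    by linarith
  hence "(p / 24 * real (card Z)) * 2 ^ card K \<le> real (card {x\<in>Z. good x}) * 2 ^ card K"
    by (simp add: algebra_simps)
  hence "p / 24 * real (card Z) \<le> real (card {x\<in>Z. good x})" by simp
  thus ?thesis unfolding p_def Z_def good_def .
qed


lemma row_anti:
  fixes v :: "nat \<Rightarrow> real"
  assumes n2: "2 \<le> n" and d1: "1 \<le> d" and d2: "2 * d \<le> n"
    and v1: "(\<Sum>j<n. (v j)\<^sup>2) = 1"
  shows "(real d / real n) / 24 * real (card (ZR n d)) \<le> real (card {x\<in>ZR n d. (real d / real n)\<^sup>2 / 320 \<le> (Xf n v x)\<^sup>2})"
proof -
  obtain a b :: "nat \<Rightarrow> nat" and L :: nat and med :: real where m: "inj_on a {..<L}" "inj_on b {..<L}" "a ` {..<L} \<inter> b ` {..<L} = {}"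
    "\<forall>k<L. a k < n" "\<forall>k<L. b k < n"
    "(\<Sum>j<n. (v j - med)\<^sup>2) \<le> (\<Sum>k<L. (v (a k) - v (b k))\<^sup>2)"
  proof -
    have n1: "1 \<le> n" using n2 by simp
    show ?thesis by (rule matching[OF n1]) (rule that; assumption)
  qed
  interpret pairing a b L n using m by unfold_locales auto
  show ?thesis
  proof (cases "(\<Sum>j<n. (v j - med)\<^sup>2) < 1/20")
    case True
    have "real (card (ZR n d)) / 2 \<le> real (card {x\<in>ZR n d. (real d / real n)\<^sup>2 / 320 \<le> (Xf n v x)\<^sup>2})"
      by (rule caseB[OF _ d1 _ v1 True]) (use n2 d2 in auto)
    moreover have "(real d / real n) / 24 * real (card (ZR n d)) \<le> real (card (ZR n d)) / 2"
    proof -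
      have "real d / real n \<le> 1" using d2 n2 by (simp add: divide_le_eq)
      hence "(real d / real n) / 24 \<le> 1/2" by simp
      hence "(real d / real n) / 24 * real (card (ZR n d)) \<le> 1/2 * real (card (ZR n d))"
        by (rule mult_right_mono) simp
      thus ?thesis by simp
    qed
    ultimately show ?thesis by linarith
  next
    case False
    hence "1/20 \<le> (\<Sum>k<L. (v (a k) - v (b k))\<^sup>2)" using m(6) by linarith
    thus ?thesis by (rule caseA[OF n2 d1 d2])
  qed
qed



lemma rows_PiE: "row_matrices m n d = PiE_dflt {..<m} (\<lambda>_. 0) (\<lambda>_. ZR n d)"
  unfolding row_matrices_def PiE_dflt_def
proof (intro Collect_cong iffI allI conjI impI)
  fix M :: "nat \<Rightarrow> nat \<Rightarrow> real" and x
  assume h: "(\<forall>i<m. M i \<in> ZR n d) \<and> (\<forall>i\<ge>m. M i = (\<lambda>_. 0))"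
  show "x \<in> {..<m} \<Longrightarrow> M x \<in> ZR n d" using h by simp
  show "x \<notin> {..<m} \<Longrightarrow> M x = (\<lambda>_. 0)" using h by simp
next
  fix M :: "nat \<Rightarrow> nat \<Rightarrow> real" and i
  assume h: "\<forall>x. (x \<in> {..<m} \<longrightarrow> M x \<in> ZR n d) \<and> (x \<notin> {..<m} \<longrightarrow> M x = (\<lambda>_. 0))"
  show "i < m \<Longrightarrow> M i \<in> ZR n d" using h by simp
  show "m \<le> i \<Longrightarrow> M i = (\<lambda>_. 0)" using h by simp
qed

lemma sum_prod_rows:
  fixes g :: "(nat \<Rightarrow> real) \<Rightarrow> real"
  shows "(\<Sum>M\<in>row_matrices m n d. \<Prod>i<m. g (M i)) = (\<Sum>x\<in>ZR n d. g x) ^ m"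
proof -
  define ext :: "(nat \<Rightarrow> nat \<Rightarrow> real) \<Rightarrow> nat \<Rightarrow> nat \<Rightarrow> real"
    where "ext h = (\<lambda>i. if i \<in> {..<m} then h i else (\<lambda>_. 0))" for h
  define P where "P = PiE {..<m} (\<lambda>_. ZR n d)"
  have R: "row_matrices m n d = ext ` P"
    unfolding rows_PiE P_def ext_def by (rule dflt_image_PiE[symmetric])
  have inj: "inj_on ext P"
  proof (rule inj_onI)
    fix h h' assume "h \<in> P" "h' \<in> P" and eq: "ext h = ext h'"
    have e: "ext h i = ext h' i" for i using eq by simp
    show "h = h'"
    proof (rule PiE_ext[of h "{..<m}" "\<lambda>_. ZR n d" h'])
      show "h \<in> {..<m} \<rightarrow>\<^sub>E ZR n d" "h' \<in> {..<m} \<rightarrow>\<^sub>E ZR n d" using \<open>h \<in> P\<close> \<open>h' \<in> P\<close> by (auto simp: P_def)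
      fix i assume "i \<in> {..<m}"
      thus "h i = h' i" using e[of i] by (simp add: ext_def)
    qed
  qed
  have "(\<Sum>M\<in>row_matrices m n d. \<Prod>i<m. g (M i)) = (\<Sum>h\<in>P. \<Prod>i<m. g (ext h i))"
    unfolding R by (rule sum.reindex[OF inj, unfolded comp_def])
  also have "\<dots> = (\<Sum>h\<in>P. \<Prod>i<m. g (h i))"
    unfolding ext_def by simp
  also have "\<dots> = (\<Prod>i<m. \<Sum>x\<in>ZR n d. g x)"
    unfolding P_def by (rule prod_sum_PiE[symmetric]) (auto simp: ZR_finite)
  also have "\<dots> = (\<Sum>x\<in>ZR n d. g x) ^ m" by simp
  finally show ?thesis .
qed

lemma card_rows: "real (card (row_matrices m n d)) = real (card (ZR n d)) ^ m"
  using sum_prod_rows[of "\<lambda>_. 1" m n d] by simp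

lemma finite_rows: "finite (row_matrices m n d)"
  unfolding rows_PiE by (rule finite_PiE_dflt) (auto simp: ZR_finite)


lemma exp_m1_le: "exp (-1::real) \<le> 1/2"
proof -
  have "2 \<le> exp (1::real)" using exp_ge_add_one_self[of 1] by simp
  thus ?thesis by (simp add: exp_minus field_simps)
qed

lemma matvec_Xf: "matvec_norm m n M v = sqrt (\<Sum>i<m. (Xf n v (M i))\<^sup>2)"
  unfolding matvec_norm_def Xf_def ..

lemma main_bound:
  fixes v :: "nat \<Rightarrow> real"
  assumes n2: "2 \<le> n" and d1: "1 \<le> d" and d2: "2 * d \<le> n" and mn: "real n \<le> 2 * real m"
    and v1: "(\<Sum>j<n. (v j)\<^sup>2) = 1"
  defines "p \<equiv> real d / real n"
  shows "real (card {M\<in>row_matrices m n d. matvec_norm m n M v \<le> p/248 * sqrt (p * real n)})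
     \<le> exp (-(p/192) * real n) * real (card (row_matrices m n d))"
proof -
  define Z where "Z = ZR n d"
  define R where "R = row_matrices m n d"
  define \<tau> where "\<tau> = p\<^sup>2 / 320"
  define q where "q = p / 24"
  define f where "f x = exp (- (Xf n v x)\<^sup>2 / \<tau>)" for x
  define s where "s = (p/248)\<^sup>2 * (p * real n)"
  define Ev where "Ev = {M\<in>R. matvec_norm m n M v \<le> p/248 * sqrt (p * real n)}"
  have npos: "real n > 0" using n2 by simp
  have ppos: "p > 0" unfolding p_def using d1 npos by simp
  have taupos: "\<tau> > 0" unfolding \<tau>_def using ppos by simp
  have fZ: "finite Z" unfolding Z_def by (rule ZR_finite)
  have fR: "finite R" unfolding R_def by (rule finite_rows)
  have fpos: "f x > 0" for x unfolding f_def by simp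
  have ev1: "1 \<le> exp (s / \<tau>) * (\<Prod>i<m. f (M i))" if M: "M \<in> Ev" for M
  proof -
    define Y where "Y = (\<Sum>i<m. (Xf n v (M i))\<^sup>2)"
    have "sqrt Y \<le> p/248 * sqrt (p * real n)" using M unfolding Ev_def Y_def by (simp add: matvec_Xf)
    also have "p/248 * sqrt (p * real n) = sqrt s"
      unfolding s_def using ppos by (simp add: real_sqrt_mult)
    finally have Ys: "Y \<le> s" by simp
    have "(\<Prod>i<m. f (M i)) = exp (\<Sum>i<m. - (Xf n v (M i))\<^sup>2 / \<tau>)"
      unfolding f_def by (simp add: exp_sum)
    also have "(\<Sum>i<m. - (Xf n v (M i))\<^sup>2 / \<tau>) = - Y / \<tau>"
      unfolding Y_def by (simp add: sum_negf sum_divide_distrib)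
    finally have "exp (s / \<tau>) * (\<Prod>i<m. f (M i)) = exp ((s - Y) / \<tau>)"
      by (simp add: exp_add[symmetric] diff_divide_distrib)
    moreover have "0 \<le> (s - Y) / \<tau>" using Ys taupos by simp
    ultimately show ?thesis by simp
  qed
  have "real (card Ev) = (\<Sum>M\<in>Ev. 1)" by simp
  also have "\<dots> \<le> (\<Sum>M\<in>Ev. exp (s / \<tau>) * (\<Prod>i<m. f (M i)))"
    by (rule sum_mono) (rule ev1)
  also have "\<dots> \<le> (\<Sum>M\<in>R. exp (s / \<tau>) * (\<Prod>i<m. f (M i)))"
    by (rule sum_mono2[OF fR]) (auto simp: Ev_def intro!: mult_nonneg_nonneg prod_nonneg less_imp_le[OF fpos])
  also have "\<dots> = exp (s / \<tau>) * (\<Sum>x\<in>Z. f x) ^ m"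
    unfolding R_def Z_def by (simp add: sum_distrib_left[symmetric] sum_prod_rows)
  finally have c3: "real (card Ev) \<le> exp (s / \<tau>) * (\<Sum>x\<in>Z. f x) ^ m" .
  define G where "G = {x\<in>Z. \<tau> \<le> (Xf n v x)\<^sup>2}"
  have Gcard: "q * real (card Z) \<le> real (card G)"
    using row_anti[OF n2 d1 d2 v1] unfolding q_def G_def Z_def \<tau>_def p_def by simp
  have GZ: "G \<subseteq> Z" unfolding G_def by auto
  have sp: "(\<Sum>x\<in>Z. f x) = (\<Sum>x\<in>G. f x) + (\<Sum>x\<in>Z - G. f x)"
    using sum.subset_diff[OF GZ fZ, of f] by simp
  have s1: "(\<Sum>x\<in>G. f x) \<le> (\<Sum>x\<in>G. 1/2)"
  proof (rule sum_mono)
    fix x assume "x \<in> G"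
    hence "- (Xf n v x)\<^sup>2 / \<tau> \<le> -1" using taupos unfolding G_def by (simp add: field_simps)
    hence "f x \<le> exp (-1)" unfolding f_def by simp
    thus "f x \<le> 1/2" using exp_m1_le by linarith
  qed
  have s2: "(\<Sum>x\<in>Z - G. f x) \<le> (\<Sum>x\<in>Z - G. 1)"
  proof (rule sum_mono)
    fix x
    have "- (Xf n v x)\<^sup>2 / \<tau> \<le> 0" using taupos by (simp add: divide_nonneg_pos)
    thus "f x \<le> 1" unfolding f_def by simp
  qed
  have s3: "(\<Sum>x\<in>G. (1::real)/2) + (\<Sum>x\<in>Z - G. 1) = real (card Z) - real (card G) / 2"
    using card_Diff_subset[OF finite_subset[OF GZ fZ] GZ] card_mono[OF fZ GZ] by (simp add: of_nat_diff)
  have s4: "real (card Z) - real (card G) / 2 \<le> real (card Z) * (1 - q/2)" using Gcard by (simp add: algebra_simps)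
  have s5: "real (card Z) * (1 - q/2) \<le> real (card Z) * exp (- (q/2))"
    by (rule mult_left_mono) (use exp_ge_add_one_self[of "-(q/2)"] in auto)
  have "(\<Sum>x\<in>Z. f x) \<le> real (card Z) * exp (- (q/2))"
    using sp s1 s2 s3 s4 s5 by linarith
  hence c4: "(\<Sum>x\<in>Z. f x) \<le> real (card Z) * exp (- (q/2))" .
  have "(\<Sum>x\<in>Z. f x) ^ m \<le> (real (card Z) * exp (- (q/2))) ^ m"
    by (rule power_mono[OF c4]) (simp add: sum_nonneg less_imp_le[OF fpos])
  also have "\<dots> = real (card R) * exp (- (q/2) * real m)"
    unfolding R_def Z_def by (simp add: card_rows power_mult_distrib exp_of_nat_mult[symmetric] mult.commute)
  finally have c5: "(\<Sum>x\<in>Z. f x) ^ m \<le> real (card R) * exp (- (q/2) * real m)" .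
  have st: "s / \<tau> = 320 * p * real n / 61504"
    unfolding s_def \<tau>_def using ppos by (simp add: field_simps power2_eq_square)
  have expo: "s / \<tau> + (- (q/2) * real m) \<le> -(p/192) * real n"
  proof -
    have "p * real n \<le> 2 * (p * real m)" using mn ppos by (simp add: mult_left_mono)
    thus ?thesis unfolding st q_def using ppos npos by (simp add: field_simps)
  qed
  have "real (card Ev) \<le> exp (s / \<tau>) * (real (card R) * exp (- (q/2) * real m))"
    using c3 c5 by (meson mult_left_mono exp_ge_zero order_trans)
  also have "\<dots> = real (card R) * exp (s / \<tau> + (- (q/2) * real m))"
    by (simp only: exp_add mult.commute mult.left_commute)
  also have "\<dots> \<le> real (card R) * exp (-(p/192) * real n)"
    by (rule mult_left_mono) (use expo in auto)
  finally show ?thesis unfolding Ev_def R_def by (simp add: mult.commute)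
qed


theorem lemma2p3:
  fixes p :: real
  assumes "0 < p" and "p \<le> 1/2"
  shows "\<exists>C c :: real. C > 0 \<and> c > 0 \<and>
    (\<forall>n d m :: nat. \<forall>v :: nat \<Rightarrow> real.
       0 < d \<longrightarrow> d \<le> n \<longrightarrow> real d = p * real n \<longrightarrow>
       real n / 2 \<le> real m \<longrightarrow> m \<le> n \<longrightarrow>
       (\<Sum>j<n. (v j)\<^sup>2) = 1 \<longrightarrow>
       measure_pmf.prob (pmf_of_set (row_matrices m n d))
         {M. matvec_norm m n M v \<le> c * sqrt (p * real n)} \<le> exp (- C * real n))"
proof (intro exI conjI allI impI)
  show "p / 192 > 0" "p / 248 > 0" using assms by auto
  fix n d m :: nat and v :: "nat \<Rightarrow> real"
  assume d0: "0 < d" and dn: "d \<le> n" and dp: "real d = p * real n" and mn: "real n / 2 \<le> real m"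
    and "m \<le> n" and v1: "(\<Sum>j<n. (v j)\<^sup>2) = 1"
  have "p * real n \<le> (1/2) * real n" by (rule mult_right_mono) (use assms in auto)
  hence "real d \<le> real n / 2" using dp by simp
  hence d2: "2 * d \<le> n" by linarith
  have d1: "1 \<le> d" using d0 by simp
  have n2: "2 \<le> n" using d2 d1 by linarith
  have npos: "real n > 0" using n2 by simp
  have pdef: "p = real d / real n" using dp npos by simp
  define R where "R = row_matrices m n d"
  have fR: "finite R" unfolding R_def by (rule finite_rows)
  have cardR: "real (card R) > 0"
    unfolding R_def card_rows using ZR_card_pos[OF dn] by simp
  hence Rne: "R \<noteq> {}" by auto
  have mb: "real (card {M\<in>R. matvec_norm m n M v \<le> p/248 * sqrt (p * real n)})
     \<le> exp (-(p/192) * real n) * real (card R)"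
    unfolding R_def pdef by (rule main_bound[OF n2 d1 d2 _ v1]) (use mn in linarith)
  have "measure_pmf.prob (pmf_of_set R) {M. matvec_norm m n M v \<le> p/248 * sqrt (p * real n)}
      = real (card (R \<inter> {M. matvec_norm m n M v \<le> p/248 * sqrt (p * real n)})) / real (card R)"
    using measure_pmf_of_set[OF Rne fR] by simp
  also have "R \<inter> {M. matvec_norm m n M v \<le> p/248 * sqrt (p * real n)} = {M\<in>R. matvec_norm m n M v \<le> p/248 * sqrt (p * real n)}"
    by auto
  also have "real (card \<dots>) / real (card R) \<le> exp (-(p/192) * real n)"
    using mb cardR by (simp add: divide_le_eq)
  finally show "measure_pmf.prob (pmf_of_set (row_matrices m n d))
         {M. matvec_norm m n M v \<le> p / 248 * sqrt (p * real n)} \<le> exp (- (p / 192) * real n)"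
    unfolding R_def .
qed

end
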